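(* Let $\mathfrak g=\mathrm{span}_{i\mathbb R}\tilde{\mathfrak g}\subseteq\mathfrak{su}(2^n)$ be a Lie algebra spanned by $i$ times the Pauli strings in a set $\tilde{\mathfrak g}$, and let $b_1\ne b_2$ be two commuting Pauli strings in $\tilde{\mathfrak g}$ that lie in the same connected component of the frustration graph of $\mathfrak g$. Then their distance in the frustration graph is $2$; i.e. there exists a Pauli string $g\in\tilde{\mathfrak g}$ with $[g,b_1]\ne0$ and $[g,b_2]\ne0$.
   Context: Pauli strings on $n$ qubits are tensor products of $I,X,Y,Z$, not all identity; two Pauli strings either commute or anticommute. It is assumed that every Pauli string $\sigma$ with $i\sigma\in\mathfrak g$ belongs to $\tilde{\mathfrak g}$ (Pauli strings are considered up to sign/phase). The frustration graph of $\mathfrak g$ has vertex set $\tilde{\mathfrak g}$ and an edge between $\sigma,\tau$ iff $[\sigma,\tau]\neq0$. *)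

theory Defs
  imports "Jordan_Normal_Form.Matrix"
begin

datatype pauli = PI | PX | PY | PZ

fun pauli_entry :: "pauli \<Rightarrow> nat \<Rightarrow> nat \<Rightarrow> complex" where
  "pauli_entry PI a b = (if a = b then 1 else 0)"
| "pauli_entry PX a b = (if a \<noteq> b then 1 else 0)"
| "pauli_entry PY a b = (if a = b then 0 else if a = 0 then - \<i> else \<i>)"
| "pauli_entry PZ a b = (if a \<noteq> b then 0 else if a = 0 then 1 else -1)"

definition bit_of :: "nat \<Rightarrow> nat \<Rightarrow> nat" where
  "bit_of r j = (r div 2 ^ j) mod 2"

text \<open>The 2^n x 2^n matrix of a Pauli string (tensor product of its letters).\<close>
definition pmat :: "nat \<Rightarrow> pauli list \<Rightarrow> complex mat" where
  "pmat n \<sigma> = mat (2 ^ n) (2 ^ n)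
     (\<lambda>(r, c). \<Prod>j<n. pauli_entry (\<sigma> ! j) (bit_of r j) (bit_of c j))"

text \<open>Pauli strings on n qubits (not all identity), phase-free representatives.\<close>
definition pauli_strings :: "nat \<Rightarrow> pauli list set" where
  "pauli_strings n = {\<sigma>. length \<sigma> = n \<and> (\<exists>p \<in> set \<sigma>. p \<noteq> PI)}"

inductive_set lspan :: "nat \<Rightarrow> pauli list set \<Rightarrow> complex mat set" for n G where
  gen: "\<sigma> \<in> G \<Longrightarrow> \<i> \<cdot>\<^sub>m pmat n \<sigma> \<in> lspan n G"
| zero: "0\<^sub>m (2 ^ n) (2 ^ n) \<in> lspan n G"
| add: "A \<in> lspan n G \<Longrightarrow> B \<in> lspan n G \<Longrightarrow> A + B \<in> lspan n G"
| scale: "A \<in> lspan n G \<Longrightarrow> complex_of_real r \<cdot>\<^sub>m A \<in> lspan n G"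

definition pcommute :: "nat \<Rightarrow> pauli list \<Rightarrow> pauli list \<Rightarrow> bool" where
  "pcommute n \<sigma> \<tau> \<longleftrightarrow> pmat n \<sigma> * pmat n \<tau> = pmat n \<tau> * pmat n \<sigma>"

definition frust_edges :: "nat \<Rightarrow> pauli list set \<Rightarrow> (pauli list \<times> pauli list) set" where
  "frust_edges n G = {(\<sigma>, \<tau>). \<sigma> \<in> G \<and> \<tau> \<in> G \<and> \<not> pcommute n \<sigma> \<tau>}"

end

theory Submission
  imports Defs
begin

fun pm :: "pauli \<Rightarrow> pauli \<Rightarrow> pauli" where
  "pm PI q = q"
| "pm p PI = p"
| "pm PX PX = PI" | "pm PY PY = PI" | "pm PZ PZ = PI"
| "pm PX PY = PZ" | "pm PY PX = PZ"
| "pm PY PZ = PX" | "pm PZ PY = PX"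
| "pm PZ PX = PY" | "pm PX PZ = PY"

fun ph :: "pauli \<Rightarrow> pauli \<Rightarrow> complex" where
  "ph PX PY = \<i>" | "ph PY PX = - \<i>"
| "ph PY PZ = \<i>" | "ph PZ PY = - \<i>"
| "ph PZ PX = \<i>" | "ph PX PZ = - \<i>"
| "ph p q = 1"

lemma letter_mult:
  assumes "a < 2" "c < 2"
  shows "pauli_entry p a 0 * pauli_entry q 0 c + pauli_entry p a 1 * pauli_entry q 1 c
       = ph p q * pauli_entry (pm p q) a c"
proof -
  have "a = 0 \<or> a = 1" "c = 0 \<or> c = 1" using assms by auto
  then show ?thesis by (cases p; cases q; auto)
qed

lemma pm_comm: "pm p q = pm q p" by (cases p; cases q; simp)
lemma ph_swap: "ph q p = cnj (ph p q)" by (cases p; cases q; simp)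
lemma pm_PI: "pm p q = PI \<longleftrightarrow> p = q" by (cases p; cases q; simp)
lemma pm_same[simp]: "pm p p = PI" by (cases p; simp)
lemma ph_same: "ph p p = 1" by (cases p; simp)

lemma bit_low: "k < 2^n \<Longrightarrow> bit_of k n = 0"
  by (simp add: bit_of_def)

lemma bit_high: "k < 2^n \<Longrightarrow> bit_of (k + 2^n) n = 1"
  by (simp add: bit_of_def)

lemma bit_shift: assumes "j < n" shows "bit_of (k + 2^n) j = bit_of k j"
proof -
  have d: "(2::nat)^j dvd 2^n" using assms by (simp add: le_imp_power_dvd)
  have "(k + 2^n) div 2^j = k div 2^j + 2^n div 2^j"
    using d by (simp add: div_plus_div_distrib_dvd_right)
  moreover have "(2::nat)^n div 2^j = 2^(n-j)" using assms
    by (simp add: power_diff)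
  moreover obtain t where "(2::nat)^(n-j) = 2*t" using assms
    by (metis dvd_def dvd_power zero_less_diff)
  ultimately show ?thesis unfolding bit_of_def by simp
qed

lemma sum_split2: "(\<Sum>k<2*m. f k) = (\<Sum>k<m. f k) + (\<Sum>k<m. f (k + m::nat))"
proof -
  have "{..<2*m} = {..<m} \<union> {m..<m+m}" by auto
  then have "(\<Sum>k<2*m. f k) = (\<Sum>k<m. f k) + (\<Sum>k\<in>{m..<m+m}. f k)"
    by (metis ivl_disj_int_one(2) ivl_disj_un_one(2) finite_lessThan finite_atLeastLessThan sum.union_disjoint le_add1)
  also have "(\<Sum>k\<in>{m..<m+m}. f k) = (\<Sum>k<m. f (k + m))"
    using sum.shift_bounds_nat_ivl[of f 0 m m] by (simp add: lessThan_atLeast0)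
  finally show ?thesis .
qed

lemma sum_prod_bits:
  "(\<Sum>k<2^n. \<Prod>j<n. (g j (bit_of k j) :: complex)) = (\<Prod>j<n. g j 0 + g j 1)"
proof (induction n)
  case 0
  then show ?case by simp
next
  case (Suc n)
  have "(\<Sum>k<2^Suc n. \<Prod>j<Suc n. g j (bit_of k j))
     = (\<Sum>k<2^n. \<Prod>j<Suc n. g j (bit_of k j)) + (\<Sum>k<2^n. \<Prod>j<Suc n. g j (bit_of (k + 2^n) j))"
    using sum_split2 by simp
  also have "(\<Sum>k<2^n. \<Prod>j<Suc n. g j (bit_of k j)) = (\<Sum>k<2^n. \<Prod>j<n. g j (bit_of k j)) * g n 0"
    by (simp add: sum_distrib_right bit_low)
  also have "(\<Sum>k<2^n. \<Prod>j<Suc n. g j (bit_of (k + 2^n) j)) = (\<Sum>k<2^n. \<Prod>j<n. g j (bit_of k j)) * g n 1"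
    by (simp add: sum_distrib_right bit_high bit_shift)
  finally show ?case using Suc by (simp add: algebra_simps)
qed


definition mulp :: "nat \<Rightarrow> pauli list \<Rightarrow> pauli list \<Rightarrow> pauli list" where
  "mulp n s t = map (\<lambda>j. pm (s!j) (t!j)) [0..<n]"

definition phase :: "nat \<Rightarrow> pauli list \<Rightarrow> pauli list \<Rightarrow> complex" where
  "phase n s t = (\<Prod>j<n. ph (s!j) (t!j))"

lemma mulp_nth: "j < n \<Longrightarrow> mulp n s t ! j = pm (s!j) (t!j)"
  by (simp add: mulp_def)

lemma mulp_len: "length (mulp n s t) = n" by (simp add: mulp_def)

lemma mulp_comm: "mulp n s t = mulp n t s"
  by (simp add: mulp_def pm_comm)

lemma phase_swap: "phase n t s = cnj (phase n s t)"
  unfolding phase_def cnj_prod by (intro prod.cong refl ph_swap)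

lemma pmat_carrier[simp]: "pmat n s \<in> carrier_mat (2^n) (2^n)"
  by (simp add: pmat_def)

lemma pmat_dims[simp]: "dim_row (pmat n s) = 2^n" "dim_col (pmat n s) = 2^n"
  by (simp_all add: pmat_def)

lemma bit_lt2: "bit_of r j < 2" by (simp add: bit_of_def)

lemma pmat_index: "r < 2^n \<Longrightarrow> c < 2^n \<Longrightarrow> pmat n s $$ (r,c) = (\<Prod>j<n. pauli_entry (s!j) (bit_of r j) (bit_of c j))"
  by (simp add: pmat_def)

lemma pmat_mult: "pmat n s * pmat n t = phase n s t \<cdot>\<^sub>m pmat n (mulp n s t)"
proof (rule eq_matI)
  fix r c assume r: "r < dim_row (phase n s t \<cdot>\<^sub>m pmat n (mulp n s t))"
    and c: "c < dim_col (phase n s t \<cdot>\<^sub>m pmat n (mulp n s t))"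
  then have r': "r < 2^n" and c': "c < 2^n" by auto
  define g where "g = (\<lambda>j b. pauli_entry (s!j) (bit_of r j) b * pauli_entry (t!j) b (bit_of c j))"
  have "(pmat n s * pmat n t) $$ (r,c) = (\<Sum>k<2^n. pmat n s $$ (r,k) * pmat n t $$ (k,c))"
    using r' c' by (simp add: scalar_prod_def lessThan_atLeast0)
  also have "\<dots> = (\<Sum>k<2^n. (\<Prod>j<n. pauli_entry (s!j) (bit_of r j) (bit_of k j))
          * (\<Prod>j<n. pauli_entry (t!j) (bit_of k j) (bit_of c j)))"
    using r' c' by (intro sum.cong) (simp_all add: pmat_index)
  also have "\<dots> = (\<Sum>k<2^n. \<Prod>j<n. g j (bit_of k j))"
    by (simp add: g_def prod.distrib)
  also have "\<dots> = (\<Prod>j<n. g j 0 + g j 1)" by (rule sum_prod_bits)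
  also have "\<dots> = (\<Prod>j<n. ph (s!j) (t!j) * pauli_entry (mulp n s t ! j) (bit_of r j) (bit_of c j))"
    using letter_mult[OF bit_lt2 bit_lt2] by (intro prod.cong) (simp_all add: g_def mulp_nth)
  also have "\<dots> = (phase n s t \<cdot>\<^sub>m pmat n (mulp n s t)) $$ (r,c)"
    using r' c' by (simp add: phase_def pmat_def prod.distrib)
  finally show "(pmat n s * pmat n t) $$ (r,c) = (phase n s t \<cdot>\<^sub>m pmat n (mulp n s t)) $$ (r,c)" .
qed auto

lemma pmat_mult_rev: "pmat n t * pmat n s = cnj (phase n s t) \<cdot>\<^sub>m pmat n (mulp n s t)"
  using pmat_mult[of n t s] unfolding mulp_comm[of n t s] phase_swap[of n t s] .

definition U4 :: "complex set" where "U4 = {1, -1, \<i>, -\<i>}"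

lemma ph_U4: "ph p q \<in> U4" by (cases p; cases q; simp add: U4_def)

lemma U4_mult: "a \<in> U4 \<Longrightarrow> b \<in> U4 \<Longrightarrow> a * b \<in> U4"
  by (auto simp: U4_def)

lemma phase_U4: "phase n s t \<in> U4"
  unfolding phase_def
proof (induction n)
  case 0 then show ?case by (simp add: U4_def)
next
  case (Suc n) then show ?case by (simp add: U4_mult ph_U4)
qed

lemma bit_zero: "bit_of 0 j = 0" by (simp add: bit_of_def)

lemma pmat_sq00: "(pmat n s * pmat n s) $$ (0,0) = 1"
proof -
  have "phase n s s = 1" by (simp add: phase_def ph_same)
  moreover have "pmat n (mulp n s s) $$ (0,0) = 1"
    by (simp add: pmat_def mulp_nth pm_PI bit_zero)
  ultimately show ?thesis by (simp add: pmat_mult)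
qed

lemma pmat_nonzero: "\<not> (\<forall>i<2^n. \<forall>j<2^n. pmat n s $$ (i,j) = 0)"
proof
  assume z: "\<forall>i<2^n. \<forall>j<2^n. pmat n s $$ (i,j) = 0"
  have "(pmat n s * pmat n s) $$ (0,0) = 0"
    using z by (simp add: scalar_prod_def)
  then show False using pmat_sq00[of n s] by simp
qed

lemma no_both:
  assumes "pmat n s * pmat n t = pmat n t * pmat n s"
    and "pmat n s * pmat n t = - (pmat n t * pmat n s)"
  shows False
proof -
  let ?c = "phase n s t" and ?R = "pmat n (mulp n s t)"
  have c0: "?c \<noteq> 0" using phase_U4[of n s t] by (auto simp: U4_def)
  have h: "pmat n s * pmat n t = - (pmat n s * pmat n t)"
    using assms(2) by (simp only: assms(1)[symmetric])
  have "\<forall>i<2^n. \<forall>j<2^n. ?R $$ (i,j) = 0"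
  proof (intro allI impI)
    fix i j :: nat assume i: "i < 2^n" and j: "j < 2^n"
    have "(pmat n s * pmat n t) $$ (i,j) = (- (pmat n s * pmat n t)) $$ (i,j)"
      using arg_cong[where f="\<lambda>X. X $$ (i,j)", OF h] .
    also have "\<dots> = - ((pmat n s * pmat n t) $$ (i,j))"
      using i j by (intro index_uminus_mat(1)) simp_all
    finally have "(pmat n s * pmat n t) $$ (i,j) = 0" by simp
    then show "?R $$ (i,j) = 0" using i j c0 by (simp add: pmat_mult)
  qed
  then show False using pmat_nonzero by blast
qed

lemma comm_or_anti:
  "pmat n s * pmat n t = pmat n t * pmat n s \<or> pmat n s * pmat n t = - (pmat n t * pmat n s)"
proof -
  let ?c = "phase n s t" and ?R = "pmat n (mulp n s t)"
  have e1: "pmat n s * pmat n t = ?c \<cdot>\<^sub>m ?R" by (rule pmat_mult)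
  have e2: "pmat n t * pmat n s = cnj ?c \<cdot>\<^sub>m ?R" by (rule pmat_mult_rev)
  have "?c \<in> U4" by (rule phase_U4)
  then have "cnj ?c = ?c \<or> cnj ?c = - ?c" by (auto simp: U4_def)
  then show ?thesis
  proof
    assume "cnj ?c = ?c" then show ?thesis unfolding e1 e2 by simp
  next
    assume h: "cnj ?c = - ?c"
    have "?c \<cdot>\<^sub>m ?R = - ((- ?c) \<cdot>\<^sub>m ?R)" by (rule eq_matI) auto
    then show ?thesis using h unfolding e1 e2 by simp
  qed
qed

lemma anti_iff: "\<not> pcommute n s t \<longleftrightarrow> pmat n s * pmat n t = - (pmat n t * pmat n s)"
  using comm_or_anti no_both unfolding pcommute_def by metis


lemma pcommute_sym: "pcommute n s t = pcommute n t s"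
  unfolding pcommute_def by auto

lemma anti_from_prod:
  assumes W: "W \<in> carrier_mat m m" and A: "A \<in> carrier_mat m m"
    and e: "A * (c \<cdot>\<^sub>m W) = - ((c \<cdot>\<^sub>m W) * A)" and c0: "(c::complex) \<noteq> 0"
  shows "A * W = - (W * A)"
proof -
  have "c \<cdot>\<^sub>m (A * W) = - (c \<cdot>\<^sub>m (W * A))"
    using e A W by (simp add: mult_smult_distrib mult_smult_assoc_mat)
  then have h: "\<And>i j. i < m \<Longrightarrow> j < m \<Longrightarrow> c * (A * W) $$ (i,j) = - (c * (W * A) $$ (i,j))"
    using A W by (metis (no_types, lifting) carrier_matD index_mult_mat(2,3) index_smult_mat(1,2,3) index_uminus_mat(1,2,3))
  show ?thesis
  proof (rule eq_matI)
    fix i j assume "i < dim_row (- (W * A))" "j < dim_col (- (W * A))"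
    then have i: "i < m" and j: "j < m" using A W by auto
    have "c * (A * W) $$ (i,j) = c * (- (W * A) $$ (i,j))" using h[OF i j] by simp
    then have "(A * W) $$ (i,j) = - (W * A) $$ (i,j)" using c0 by (metis mult_minus_right mult_left_cancel)
    then show "(A * W) $$ (i,j) = (- (W * A)) $$ (i,j)" using i j A W by simp
  qed (use A W in auto)
qed

lemma prod_anti1:
  fixes A B C :: "complex mat"
  assumes A: "A \<in> carrier_mat m m" and B: "B \<in> carrier_mat m m" and C: "C \<in> carrier_mat m m"
    and ab: "A * B = - (B * A)" and ac: "A * C = C * A"
  shows "A * (B * C) = - ((B * C) * A)"
proof -
  have "A * (B * C) = (A * B) * C" using A B C by simp
  also have "\<dots> = - (B * A) * C" using ab by simp
  also have "\<dots> = - (B * A * C)" by (rule uminus_mult_left_mat) (use A B C in simp)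
  also have "B * A * C = B * (A * C)" using A B C by simp
  also have "\<dots> = B * (C * A)" using ac by simp
  also have "\<dots> = B * C * A" using A B C by simp
  finally show ?thesis .
qed

lemma prod_anti2:
  fixes A B C :: "complex mat"
  assumes A: "A \<in> carrier_mat m m" and B: "B \<in> carrier_mat m m" and C: "C \<in> carrier_mat m m"
    and ab: "A * B = B * A" and ac: "A * C = - (C * A)"
  shows "A * (B * C) = - ((B * C) * A)"
proof -
  have "A * (B * C) = (A * B) * C" using A B C by simp
  also have "\<dots> = B * (A * C)" using ab A B C by simp
  also have "\<dots> = B * - (C * A)" using ac by simp
  also have "\<dots> = - (B * (C * A))" by (rule uminus_mult_right_mat) (use A B C in simp)
  also have "B * (C * A) = B * C * A" using A B C by simp
  finally show ?thesis .
qed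

lemma phase_nz: "phase n s t \<noteq> 0"
  using phase_U4[of n s t] by (auto simp: U4_def)

lemma closure:
  assumes G_sub: "G \<subseteq> pauli_strings n"
    and lie: "\<forall>A \<in> lspan n G. \<forall>B \<in> lspan n G. A * B - B * A \<in> lspan n G"
    and complete: "\<forall>\<sigma> \<in> pauli_strings n. \<i> \<cdot>\<^sub>m pmat n \<sigma> \<in> lspan n G \<longrightarrow> \<sigma> \<in> G"
    and s: "s \<in> G" and t: "t \<in> G" and nc: "\<not> pcommute n s t"
  shows "mulp n s t \<in> G"
proof -
  let ?c = "phase n s t" and ?R = "pmat n (mulp n s t)"
  have e1: "pmat n s * pmat n t = ?c \<cdot>\<^sub>m ?R" by (rule pmat_mult)
  have e2: "pmat n t * pmat n s = cnj ?c \<cdot>\<^sub>m ?R" by (rule pmat_mult_rev)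
  have "?c \<in> U4" by (rule phase_U4)
  moreover have "cnj ?c \<noteq> ?c"
  proof
    assume "cnj ?c = ?c"
    then have "pcommute n s t" unfolding pcommute_def e1 e2 by simp
    then show False using nc by simp
  qed
  ultimately have cc: "?c = \<i> \<or> ?c = - \<i>" by (auto simp: U4_def)
  let ?A = "\<i> \<cdot>\<^sub>m pmat n s" and ?B = "\<i> \<cdot>\<^sub>m pmat n t"
  have AB: "?A * ?B = (\<i> * \<i> * ?c) \<cdot>\<^sub>m ?R"
  proof -
    have "?A * ?B = \<i> \<cdot>\<^sub>m (pmat n s * ?B)" by (rule mult_smult_assoc_mat[OF pmat_carrier smult_carrier_mat[OF pmat_carrier]])
    also have "pmat n s * ?B = \<i> \<cdot>\<^sub>m (pmat n s * pmat n t)" by (rule mult_smult_distrib[OF pmat_carrier pmat_carrier])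
    finally show ?thesis unfolding e1 by (intro eq_matI) auto
  qed
  have BA: "?B * ?A = (\<i> * \<i> * cnj ?c) \<cdot>\<^sub>m ?R"
  proof -
    have "?B * ?A = \<i> \<cdot>\<^sub>m (pmat n t * ?A)" by (rule mult_smult_assoc_mat[OF pmat_carrier smult_carrier_mat[OF pmat_carrier]])
    also have "pmat n t * ?A = \<i> \<cdot>\<^sub>m (pmat n t * pmat n s)" by (rule mult_smult_distrib[OF pmat_carrier pmat_carrier])
    finally show ?thesis unfolding e2 by (intro eq_matI) auto
  qed
  define r :: real where "r = (if ?c = \<i> then -1/2 else 1/2)"
  have "?A \<in> lspan n G" "?B \<in> lspan n G" using s t by (auto intro: lspan.gen)
  then have "?A * ?B - ?B * ?A \<in> lspan n G" using lie by blast
  then have L: "complex_of_real r \<cdot>\<^sub>m (?A * ?B - ?B * ?A) \<in> lspan n G" by (rule lspan.scale)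
  have "complex_of_real r \<cdot>\<^sub>m (?A * ?B - ?B * ?A) = \<i> \<cdot>\<^sub>m ?R"
    unfolding AB BA
  proof (rule eq_matI)
    fix i j assume "i < dim_row (\<i> \<cdot>\<^sub>m ?R)" "j < dim_col (\<i> \<cdot>\<^sub>m ?R)"
    then have i: "i < 2^n" and j: "j < 2^n" by auto
    show "(complex_of_real r \<cdot>\<^sub>m ((\<i> * \<i> * ?c) \<cdot>\<^sub>m ?R - (\<i> * \<i> * cnj ?c) \<cdot>\<^sub>m ?R)) $$ (i, j) =
          (\<i> \<cdot>\<^sub>m ?R) $$ (i, j)"
      using i j cc by (auto simp: r_def algebra_simps)
  qed auto
  with L have iR: "\<i> \<cdot>\<^sub>m ?R \<in> lspan n G" by simp
  have ls: "length s = n" "length t = n" using s t G_sub by (auto simp: pauli_strings_def)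
  have "\<exists>p \<in> set (mulp n s t). p \<noteq> PI"
  proof (rule ccontr)
    assume "\<not> ?thesis"
    then have "\<forall>j<n. mulp n s t ! j = PI" by (simp add: mulp_len)
    then have "\<forall>j<n. s ! j = t ! j" by (simp add: mulp_nth pm_PI)
    then have "s = t" using ls by (simp add: nth_equalityI)
    then show False using nc by (simp add: pcommute_def)
  qed
  then have "mulp n s t \<in> pauli_strings n" by (simp add: pauli_strings_def mulp_len)
  then show ?thesis using complete iR by blast
qed


lemma main_walk:
  assumes G_sub: "G \<subseteq> pauli_strings n"
    and lie: "\<forall>A \<in> lspan n G. \<forall>B \<in> lspan n G. A * B - B * A \<in> lspan n G"
    and complete: "\<forall>\<sigma> \<in> pauli_strings n. \<i> \<cdot>\<^sub>m pmat n \<sigma> \<in> lspan n G \<longrightarrow> \<sigma> \<in> G"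
  shows "\<forall>a b. (a, b) \<in> (frust_edges n G) ^^ k \<longrightarrow> a \<noteq> b \<longrightarrow> pcommute n a b
           \<longrightarrow> (\<exists>g \<in> G. \<not> pcommute n g a \<and> \<not> pcommute n g b)"
proof (induction k rule: less_induct)
  case (less k)
  let ?E = "frust_edges n G"
  have E: "(x, y) \<in> ?E \<longleftrightarrow> x \<in> G \<and> y \<in> G \<and> \<not> pcommute n x y" for x y
    by (simp add: frust_edges_def)
  show ?case
  proof (intro allI impI)
    fix a b assume w: "(a, b) \<in> ?E ^^ k" and ab: "a \<noteq> b" and cab: "pcommute n a b"
    have "k = 0 \<or> k = 1 \<or> k = 2 \<or> (\<exists>m. k = Suc (Suc (Suc m)))" by presburger
    then consider "k = 0" | "k = 1" | "k = 2" | m where "k = Suc (Suc (Suc m))"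
      by blast
    then show "\<exists>g \<in> G. \<not> pcommute n g a \<and> \<not> pcommute n g b"
    proof cases
      case 1 then show ?thesis using w ab by simp
    next
      case 2
      with w have "(a, b) \<in> ?E" by simp
      then show ?thesis using cab unfolding E by simp
    next
      case 3
      from w 3 have w2: "(a, b) \<in> ?E ^^ Suc (Suc 0)" by (simp only: numeral_2_eq_2)
      obtain v where av: "(a, v) \<in> ?E" and vb0: "(v, b) \<in> ?E ^^ Suc 0"
        using relpow_Suc_D2[OF w2] by blast
      have vb: "(v, b) \<in> ?E" using vb0 by (metis One_nat_def relpow_1)
      have h1: "v \<in> G \<and> \<not> pcommute n a v" using av unfolding E by simp
      have h2: "\<not> pcommute n v b" using vb unfolding E by simp
      have h3: "\<not> pcommute n v a" using h1 pcommute_sym[of n a v] by simp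
      show ?thesis using h1 h2 h3 by blast
    next
      case 4
      obtain v1 where av1: "(a, v1) \<in> ?E" and r1: "(v1, b) \<in> ?E ^^ Suc (Suc m)"
        using relpow_Suc_D2[OF w[unfolded 4]] by blast
      obtain v2 where v12: "(v1, v2) \<in> ?E" and r2: "(v2, b) \<in> ?E ^^ Suc m"
        using relpow_Suc_D2[OF r1] by blast
      obtain v3 where v23: "(v2, v3) \<in> ?E" and r3: "(v3, b) \<in> ?E ^^ m"
        using relpow_Suc_D2[OF r2] by blast
      let ?T = "\<exists>g \<in> G. \<not> pcommute n g a \<and> \<not> pcommute n g b"
      have IH: "\<And>x. (a, x) \<in> ?E \<Longrightarrow> (x, v3) \<in> ?E \<Longrightarrow> ?T"
      proof -
        fix x assume ax: "(a, x) \<in> ?E" and xv: "(x, v3) \<in> ?E"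
        have reach: "(a, b) \<in> ?E ^^ Suc (Suc m)" by (rule relpow_Suc_I2[OF ax relpow_Suc_I2[OF xv r3]])
        have lt: "Suc (Suc m) < k" using 4 by simp
        show ?T using less.IH[OF lt, rule_format, OF reach ab cab] .
      qed
      show ?thesis
      proof (cases "pcommute n a v2")
        case False
        then have "(a, v2) \<in> ?E" using av1 v12 unfolding E by simp
        then show ?thesis using v23 by (rule IH)
      next
        case cav2: True
        show ?thesis
        proof (cases "pcommute n v1 v3")
          case False
          then have "(v1, v3) \<in> ?E" using v12 v23 unfolding E by simp
          with av1 show ?thesis by (rule IH)
        next
          case c13: True
          have a: "a \<in> G" and g1: "v1 \<in> G" and g2: "v2 \<in> G" and g3: "v3 \<in> G"
            using av1 v12 v23 unfolding E by auto
          let ?w = "mulp n v1 v2"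
          have wG: "?w \<in> G" using closure[OF G_sub lie complete g1 g2] v12 unfolding E by simp
          let ?c = "phase n v1 v2"
          have pw: "pmat n v1 * pmat n v2 = ?c \<cdot>\<^sub>m pmat n ?w" by (rule pmat_mult)
          have "pmat n a * pmat n v1 = - (pmat n v1 * pmat n a)"
            using av1 unfolding E anti_iff by simp
          moreover have "pmat n a * pmat n v2 = pmat n v2 * pmat n a"
            using cav2 unfolding pcommute_def .
          ultimately have "pmat n a * (pmat n v1 * pmat n v2) = - ((pmat n v1 * pmat n v2) * pmat n a)"
            by (rule prod_anti1[OF pmat_carrier pmat_carrier pmat_carrier])
          then have "pmat n a * pmat n ?w = - (pmat n ?w * pmat n a)"
            unfolding pw by (rule anti_from_prod[OF pmat_carrier pmat_carrier _ phase_nz])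
          then have naw: "\<not> pcommute n a ?w" unfolding anti_iff .
          have "pmat n v3 * pmat n v1 = pmat n v1 * pmat n v3"
            using c13 unfolding pcommute_def by (rule sym)
          moreover have "pmat n v3 * pmat n v2 = - (pmat n v2 * pmat n v3)"
            using v23 unfolding E pcommute_sym[of n v2 v3] anti_iff by simp
          ultimately have "pmat n v3 * (pmat n v1 * pmat n v2) = - ((pmat n v1 * pmat n v2) * pmat n v3)"
            by (rule prod_anti2[OF pmat_carrier pmat_carrier pmat_carrier])
          then have "pmat n v3 * pmat n ?w = - (pmat n ?w * pmat n v3)"
            unfolding pw by (rule anti_from_prod[OF pmat_carrier pmat_carrier _ phase_nz])
          then have "\<not> pcommute n v3 ?w" unfolding anti_iff .
          then have "\<not> pcommute n ?w v3" using pcommute_sym by metis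
          then have "(a, ?w) \<in> ?E" "(?w, v3) \<in> ?E" using a wG g3 naw unfolding E by auto
          then show ?thesis by (rule IH)
        qed
      qed
    qed
  qed
qed

theorem theoremC1:
  fixes n :: nat and G :: "pauli list set" and b1 b2 :: "pauli list"
  assumes G_sub: "G \<subseteq> pauli_strings n"
    and lie: "\<forall>A \<in> lspan n G. \<forall>B \<in> lspan n G. A * B - B * A \<in> lspan n G"
    and complete: "\<forall>\<sigma> \<in> pauli_strings n. \<i> \<cdot>\<^sub>m pmat n \<sigma> \<in> lspan n G \<longrightarrow> \<sigma> \<in> G"
    and b1: "b1 \<in> G" and b2: "b2 \<in> G" and ne: "b1 \<noteq> b2"
    and comm: "pcommute n b1 b2"
    and conn: "(b1, b2) \<in> (frust_edges n G)\<^sup>*"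
  shows "\<exists>g \<in> G. \<not> pcommute n g b1 \<and> \<not> pcommute n g b2"
proof -
  obtain k where "(b1, b2) \<in> (frust_edges n G) ^^ k" using conn rtrancl_imp_relpow by blast
  then show ?thesis using main_walk[OF G_sub lie complete, of k] ne comm by blast
qed

end
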